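(* With the Fock space $\widetilde{\mathcal H}$, operators $M_k,A_k,D_k$ and vectors $\eta_k$ as in the context, let $R$ be a positive integer and $\varepsilon\colon\{1,\dots,R\}\to\{1,*\}$, $\iota\colon\{1,\dots,R\}\to\{1,\dots,N\}$. Suppose $\psi\colon\{1,\dots,R\}\to\mathcal L(\widetilde{\mathcal H})$ satisfies: (a) $\psi(1)\in\{M_{\iota(1)},A^*_{\iota(1)}\}$ if $\varepsilon(1)=1$, and $\psi(1)\in\{M^*_{\iota(1)},D^*_{\iota(1)}\}$ if $\varepsilon(1)=*$; (b) $\psi(R)\in\{M_{\iota(R)},D_{\iota(R)}\}$ if $\varepsilon(R)=1$, and $\psi(R)\in\{M^*_{\iota(R)},A_{\iota(R)}\}$ if $\varepsilon(R)=*$; (c) for $2\le j\le R-1$, $\psi(j)\in\{M_{\iota(j)}^{\varepsilon(j)},(A^*_{\iota(j)})^{\varepsilon(j)},D_{\iota(j)}^{\varepsilon(j)}\}$. Let $k,k'\in\{1,\dots,N\}$. Then $\langle\psi(1)\psi(2)\cdots\psi(R)\eta_k,\eta_{k'}\rangle=0$ unless $k=k'=\iota(1)=\iota(R)$ and there exists $\pi\in NC(R)$ such that (i) $\pi\in NC_{\mathrm{irr}}(R)$, (ii) for every block $(q_1<\dots<q_r)$ of $\pi$, $\iota(q_1)=\dots=\iota(q_r)$ and $\varepsilon(q_1)\ne\varepsilon(q_2)\ne\dots\ne\varepsilon(q_r)\ne\varepsilon(q_1)$, and $\psi=\varphi_\pi$, where $\varphi_\pi$ is defined by: $\varphi_\pi(j)=M_{\iota(j)}^{\varepsilon(j)}$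 for $j\in\{1,R\}$; for $2\le j\le R-1$ with $\varepsilon(j)=1$, $\varphi_\pi(j)$ is $D_{\iota(j)}$, $A^*_{\iota(j)}$ or $M_{\iota(j)}$ according as $j$ is the least element of its block, the greatest element of its block, or neither; for $2\le j\le R-1$ with $\varepsilon(j)=*$, $\varphi_\pi(j)$ is $A_{\iota(j)}$, $D^*_{\iota(j)}$ or $M^*_{\iota(j)}$ in the same three cases.
   Context: $\sigma_1,\dots,\sigma_N$ are compactly supported symmetric finite positive Borel measures on $\mathbf{R}$. $NC(R)$ is the set of noncrossing partitions of $\{1,\dots,R\}$ and $NC_{\mathrm{irr}}(R)$ those in which $1$ and $R$ lie in the same block. Fock model: let $\{e,f\}$ be an orthonormal basis of $\mathbf{C}^2$, $H_k^e=L^2(\sigma_k)\otimes\mathbf{C}e$, $H_k^f=L^2(\sigma_k)\otimes\mathbf{C}f$, $\mathcal H=\bigoplus_{k=1}^N(H_k^e\oplus H_k^f)$, $\widetilde{\mathcal H}=\bigoplus_{n\ge1}\mathcal H^{\otimes n}$ (no vacuum), with inner product $\langle\cdot,\cdot\rangle$. Let $\mathrm{id}_k\in L^2(\sigma_k)$ be $t\mapsto t$ and $1_k$ the constant $1$; $m_k\colon H_k^e\to H_k^f$, $m_k(F\otimes e)=(\mathrm{id}_k F)\otimes f$. For $v_1,\dots,v_n\in\mathcal H$: $M_k(v_1\otimes\cdots\otimes v_n)=m_k(P_{H_k^e}v_1)\otimes v_2\otimes\cdots\otimes v_n$ (so $M_k^*(v_1\otimes\cdots\otimes v_n)=m_k^*(P_{H_k^f}v_1)\otimes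 v_2\otimes\cdots\otimes v_n$), $A_k^*(v_1\otimes\cdots\otimes v_n)=(\mathrm{id}_k\otimes f)\otimes v_1\otimes\cdots\otimes v_n$, $D_k^*(v_1\otimes\cdots\otimes v_n)=(\mathrm{id}_k\otimes e)\otimes v_1\otimes\cdots\otimes v_n$; adjoints $A_k(v_1\otimes\cdots\otimes v_n)=\langle v_1,\mathrm{id}_k\otimes f\rangle v_2\otimes\cdots\otimes v_n$, $D_k(v_1\otimes\cdots\otimes v_n)=\langle v_1,\mathrm{id}_k\otimes e\rangle v_2\otimes\cdots\otimes v_n$ for $n\ge2$, and $A_kv=D_kv=0$ for $v\in\mathcal H$. $P_H$ is orthogonal projection onto $H$. For an operator $Z$, $Z^1=Z$ and $Z^*$ is its adjoint (so $(A_k^* )^*=A_k$). $\eta_k=1_k\otimes e+1_k\otimes f$. *)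

theory Defs
  imports "HOL-Analysis.Analysis" "HOL-Library.Disjoint_Sets"
begin

text \<open>A vector is represented by its
  "kernel": a function of a tensor word ((k_1,b_1,t_1),...,(k_n,b_n,t_n)), where
  k_i is the component index, b_i = True means the basis vector e and b_i = False
  means f, and t_i is the variable of L2(sigma_{k_i}).  The degree-n component
  is the restriction to words of length n; the value at the empty word (vacuum)
  plays no role.\<close>

type_synonym fvec = "(nat \<times> bool \<times> real) list \<Rightarrow> complex"

definition deg_inner :: "(nat \<Rightarrow> real measure) \<Rightarrow> nat \<Rightarrow> nat \<Rightarrow> fvec \<Rightarrow> fvec \<Rightarrow> complex" where
  "deg_inner \<sigma> N n v w =
     (\<Sum>ks\<in>{ks. length ks = n \<and> set ks \<subseteq> {1..N}}.
      \<Sum>bs\<in>{bs::bool list. length bs = n}.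
        LINT x | PiM {..<n} (\<lambda>i. \<sigma> (ks ! i)).
          v (map (\<lambda>i. (ks ! i, bs ! i, x i)) [0..<n]) *
          cnj (w (map (\<lambda>i. (ks ! i, bs ! i, x i)) [0..<n])))"

definition fock_inner :: "(nat \<Rightarrow> real measure) \<Rightarrow> nat \<Rightarrow> fvec \<Rightarrow> fvec \<Rightarrow> complex" where
  "fock_inner \<sigma> N v w = (\<Sum>n. deg_inner \<sigma> N (Suc n) v w)"

definition opM :: "nat \<Rightarrow> fvec \<Rightarrow> fvec" where
  "opM k v = (\<lambda>xs. case xs of [] \<Rightarrow> 0
     | (k', b, t) # rest \<Rightarrow> if k' = k \<and> \<not> b then complex_of_real t * v ((k, True, t) # rest) else 0)"

definition opMstar :: "nat \<Rightarrow> fvec \<Rightarrow> fvec" where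
  "opMstar k v = (\<lambda>xs. case xs of [] \<Rightarrow> 0
     | (k', b, t) # rest \<Rightarrow> if k' = k \<and> b then complex_of_real t * v ((k, False, t) # rest) else 0)"

definition opAstar :: "nat \<Rightarrow> fvec \<Rightarrow> fvec" where
  "opAstar k v = (\<lambda>xs. case xs of [] \<Rightarrow> 0
     | (k', b, t) # rest \<Rightarrow> if k' = k \<and> \<not> b \<and> rest \<noteq> [] then complex_of_real t * v rest else 0)"

definition opDstar :: "nat \<Rightarrow> fvec \<Rightarrow> fvec" where
  "opDstar k v = (\<lambda>xs. case xs of [] \<Rightarrow> 0
     | (k', b, t) # rest \<Rightarrow> if k' = k \<and> b \<and> rest \<noteq> [] then complex_of_real t * v rest else 0)"

definition opA :: "(nat \<Rightarrow> real measure) \<Rightarrow> nat \<Rightarrow> fvec \<Rightarrow> fvec" where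
  "opA \<sigma> k v = (\<lambda>xs. if xs = [] then 0
     else LINT s | \<sigma> k. v ((k, False, s) # xs) * complex_of_real s)"

definition opD :: "(nat \<Rightarrow> real measure) \<Rightarrow> nat \<Rightarrow> fvec \<Rightarrow> fvec" where
  "opD \<sigma> k v = (\<lambda>xs. if xs = [] then 0
     else LINT s | \<sigma> k. v ((k, True, s) # xs) * complex_of_real s)"

text \<open>Powers Z^eps, where eps = True stands for the exponent 1 and eps = False for *.\<close>

definition Mpow :: "nat \<Rightarrow> bool \<Rightarrow> fvec \<Rightarrow> fvec" where
  "Mpow k e = (if e then opM k else opMstar k)"

definition Astarpow :: "(nat \<Rightarrow> real measure) \<Rightarrow> nat \<Rightarrow> bool \<Rightarrow> fvec \<Rightarrow> fvec" where
  "Astarpow \<sigma> k e = (if e then opAstar k else opA \<sigma> k)"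

definition Dpow :: "(nat \<Rightarrow> real measure) \<Rightarrow> nat \<Rightarrow> bool \<Rightarrow> fvec \<Rightarrow> fvec" where
  "Dpow \<sigma> k e = (if e then opD \<sigma> k else opDstar k)"

text \<open>eta_k = 1_k (x) e + 1_k (x) f.\<close>

definition eta :: "nat \<Rightarrow> fvec" where
  "eta k = (\<lambda>xs. case xs of [(k', b, t)] \<Rightarrow> if k' = k then 1 else 0 | _ \<Rightarrow> 0)"

definition NC :: "nat \<Rightarrow> nat set set \<Rightarrow> bool" where
  "NC R \<pi> \<longleftrightarrow> partition_on {1..R} \<pi> \<and>
     (\<forall>B1\<in>\<pi>. \<forall>B2\<in>\<pi>. B1 \<noteq> B2 \<longrightarrow>
        \<not> (\<exists>a b c d. a < b \<and> b < c \<and> c < d \<and> a \<in> B1 \<and> c \<in> B1 \<and> b \<in> B2 \<and> d \<in> B2))"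

definition NC_irr :: "nat \<Rightarrow> nat set set \<Rightarrow> bool" where
  "NC_irr R \<pi> \<longleftrightarrow> NC R \<pi> \<and> (\<exists>B\<in>\<pi>. 1 \<in> B \<and> R \<in> B)"

definition block_of :: "nat set set \<Rightarrow> nat \<Rightarrow> nat set" where
  "block_of \<pi> j = (THE B. B \<in> \<pi> \<and> j \<in> B)"

definition block_ok :: "(nat \<Rightarrow> nat) \<Rightarrow> (nat \<Rightarrow> bool) \<Rightarrow> nat set \<Rightarrow> bool" where
  "block_ok \<iota> \<epsilon> B \<longleftrightarrow>
     (let qs = sorted_list_of_set B in
       (\<forall>i < length qs. \<iota> (qs ! i) = \<iota> (hd qs)) \<and>
       (\<forall>i. Suc i < length qs \<longrightarrow> \<epsilon> (qs ! i) \<noteq> \<epsilon> (qs ! Suc i)) \<and>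
       \<epsilon> (last qs) \<noteq> \<epsilon> (hd qs))"

definition phi :: "(nat \<Rightarrow> real measure) \<Rightarrow> nat \<Rightarrow> (nat \<Rightarrow> nat) \<Rightarrow> (nat \<Rightarrow> bool) \<Rightarrow> nat set set
     \<Rightarrow> nat \<Rightarrow> fvec \<Rightarrow> fvec" where
  "phi \<sigma> R \<iota> \<epsilon> \<pi> j =
     (if j = 1 \<or> j = R then Mpow (\<iota> j) (\<epsilon> j)
      else if j = Min (block_of \<pi> j) then (if \<epsilon> j then opD \<sigma> (\<iota> j) else opA \<sigma> (\<iota> j))
      else if j = Max (block_of \<pi> j) then (if \<epsilon> j then opAstar (\<iota> j) else opDstar (\<iota> j))
      else Mpow (\<iota> j) (\<epsilon> j))"

definition apply_word :: "(nat \<Rightarrow> fvec \<Rightarrow> fvec) \<Rightarrow> nat \<Rightarrow> fvec \<Rightarrow> fvec" where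
  "apply_word \<psi> R v = foldr (\<lambda>j w. \<psi> j w) [1..<Suc R] v"

end

theory Submission
  imports Defs
begin
datatype kind = KM | KMs | KAs | KDs | KA | KD

fun ispush :: "kind \<Rightarrow> bool" where
  "ispush KA = True" | "ispush KD = True" | "ispush _ = False"
fun ispop :: "kind \<Rightarrow> bool" where
  "ispop KAs = True" | "ispop KDs = True" | "ispop _ = False"
fun epsk :: "kind \<Rightarrow> bool" where
  "epsk KM = True" | "epsk KMs = False" | "epsk KAs = True" | "epsk KDs = False"
| "epsk KA = False" | "epsk KD = True"

fun sem :: "(nat \<Rightarrow> real measure) \<Rightarrow> kind \<Rightarrow> nat \<Rightarrow> fvec \<Rightarrow> fvec" where
  "sem \<sigma> KM q = opM q" | "sem \<sigma> KMs q = opMstar q" | "sem \<sigma> KAs q = opAstar q"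
| "sem \<sigma> KDs q = opDstar q" | "sem \<sigma> KA q = opA \<sigma> q" | "sem \<sigma> KD q = opD \<sigma> q"

type_synonym sstack = "(nat \<times> nat \<times> bool) list"

definition stp :: "(nat \<Rightarrow> kind) \<Rightarrow> (nat \<Rightarrow> nat) \<Rightarrow> nat \<Rightarrow> sstack \<Rightarrow> sstack option" where
  "stp \<kappa> \<iota> j S = (if ispush (\<kappa> j) then (if S = [] then None else Some ((j, \<iota> j, epsk (\<kappa> j)) # S))
     else (case S of [] \<Rightarrow> None | (X,q,f)#r \<Rightarrow>
       if q = \<iota> j \<and> f = (\<not> epsk (\<kappa> j)) then
         (if ispop (\<kappa> j) then (if r = [] then None else Some r) else Some ((X, q, epsk (\<kappa> j))#r))
       else None))"

fun touches :: "(nat \<Rightarrow> kind) \<Rightarrow> nat \<Rightarrow> nat \<Rightarrow> nat \<Rightarrow> nat" where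
  "touches \<kappa> j 0 i = 0"
| "touches \<kappa> j (Suc n) i = (if ispush (\<kappa> j) then touches \<kappa> (Suc j) n (Suc i)
     else if ispop (\<kappa> j) then (if i = 0 then 1 else touches \<kappa> (Suc j) n (i - 1))
     else (if i = 0 then 1 else 0) + touches \<kappa> (Suc j) n i)"

definition mom :: "(nat \<Rightarrow> real measure) \<Rightarrow> nat \<Rightarrow> nat \<Rightarrow> complex" where
  "mom \<sigma> q m = (LINT s|\<sigma> q. (complex_of_real s) ^ m)"

fun val :: "(nat \<Rightarrow> real measure) \<Rightarrow> (nat \<Rightarrow> kind) \<Rightarrow> (nat \<Rightarrow> nat) \<Rightarrow> nat \<Rightarrow> nat \<Rightarrow> nat \<Rightarrow> sstack \<Rightarrow> complex" where
  "val \<sigma> \<kappa> \<iota> k j 0 S = (if length S = 1 \<and> fst (snd (hd S)) = k then 1 else 0)"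
| "val \<sigma> \<kappa> \<iota> k j (Suc n) S = (case stp \<kappa> \<iota> j S of None \<Rightarrow> 0 | Some S' \<Rightarrow>
     (if ispush (\<kappa> j) then mom \<sigma> (\<iota> j) (Suc (touches \<kappa> (Suc j) n 0)) else 1) * val \<sigma> \<kappa> \<iota> k (Suc j) n S')"

definition shp :: "sstack \<Rightarrow> (nat \<times> bool) list" where
  "shp S = map (\<lambda>(X,q,f). (q,f)) S"
definition shx :: "(nat \<times> bool \<times> real) list \<Rightarrow> (nat \<times> bool) list" where
  "shx xs = map (\<lambda>(q,f,t). (q,f)) xs"

definition Gw :: "(nat \<Rightarrow> fvec \<Rightarrow> fvec) \<Rightarrow> nat \<Rightarrow> nat \<Rightarrow> nat \<Rightarrow> fvec" where
  "Gw \<psi> k j n = foldr (\<lambda>p w. \<psi> p w) [j..<j+n] (eta k)"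

definition tp :: "(nat \<Rightarrow> kind) \<Rightarrow> nat \<Rightarrow> nat \<Rightarrow> (nat \<times> bool \<times> real) list \<Rightarrow> complex" where
  "tp \<kappa> j n xs = (\<Prod>i<length xs. (complex_of_real (snd (snd (xs!i)))) ^ (touches \<kappa> j n i))"

lemma Gw_Suc: "Gw \<psi> k j (Suc n) = \<psi> j (Gw \<psi> k (Suc j) n)"
  unfolding Gw_def by (simp add: upt_rec)

lemma shp_Cons_iff: "shp S = shx ((q,b,t)#xs) \<longleftrightarrow> (\<exists>X S'. S = (X,q,b)#S' \<and> shp S' = shx xs)"
  by (cases S) (auto simp: shp_def shx_def)

lemma shp_Nil_iff: "shp S = shx [] \<longleftrightarrow> S = []"
  by (auto simp: shp_def shx_def)

lemma tp_Cons: "tp \<kappa> j n ((q,b,t)#xs) = (complex_of_real t) ^ (touches \<kappa> j n 0) *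
   (\<Prod>i<length xs. (complex_of_real (snd (snd (xs!i)))) ^ (touches \<kappa> j n (Suc i)))"
  unfolding tp_def length_Cons prod.lessThan_Suc_shift by simp

lemma conc:
  assumes "\<forall>p\<in>{j..<j+n}. \<psi> p = sem \<sigma> (\<kappa> p) (\<iota> p)"
    and "shp S = shx xs"
  shows "Gw \<psi> k j n xs = val \<sigma> \<kappa> \<iota> k j n S * tp \<kappa> j n xs"
  using assms
proof (induction n arbitrary: j S xs)
  case 0
  then show ?case
    apply (cases xs rule: remdups_adj.cases)
    apply (auto simp: Gw_def tp_def eta_def shp_Nil_iff shp_Cons_iff)
    done
next
  case (Suc n)
  have IH: "\<And>S xs. shp S = shx xs \<Longrightarrow> Gw \<psi> k (Suc j) n xs = val \<sigma> \<kappa> \<iota> k (Suc j) n S * tp \<kappa> (Suc j) n xs"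
    using Suc.IH Suc.prems(1) by auto
  have psi: "\<psi> j = sem \<sigma> (\<kappa> j) (\<iota> j)" using Suc.prems(1) by auto
  show ?case
  proof (cases xs)
    case Nil
    then have "S = []" using Suc.prems(2) by (simp add: shp_Nil_iff)
    then show ?thesis using Nil psi
      by (cases "\<kappa> j") (auto simp: Gw_Suc opM_def opMstar_def opAstar_def opDstar_def opA_def opD_def stp_def)
  next
    case (Cons x rest)
    obtain q b t where x: "x = (q,b,t)" by (cases x) auto
    obtain X S' where S: "S = (X,q,b)#S'" and sh: "shp S' = shx rest"
      using Suc.prems(2) Cons x shp_Cons_iff by blast
    have xs: "xs = (q,b,t)#rest" using Cons x by simp
    have shc: "\<And>X' q' b' t'. shp ((X',q',b')#S') = shx ((q',b',t')#rest)"
      using sh by (simp add: shp_def shx_def)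
    have shc2: "\<And>X' q' b'. shp ((X',q',b')#S) = shx ((q',b',s)#xs)" for s
      using Suc.prems(2) by (simp add: shp_def shx_def)
    have rn: "S' = [] \<longleftrightarrow> rest = []" using sh by (auto simp: shp_def shx_def)
    show ?thesis
    proof (cases "\<kappa> j")
      case KM
      show ?thesis
        using IH[OF shc[of X q True t]] psi KM
        by (cases "q = \<iota> j") (auto simp: Gw_Suc xs S opM_def stp_def tp_Cons)
    next
      case KMs
      show ?thesis
        using IH[OF shc[of X q False t]] psi KMs
        by (cases "q = \<iota> j") (auto simp: Gw_Suc xs S opMstar_def stp_def tp_Cons)
    next
      case KAs
      show ?thesis
        using IH[OF sh] psi KAs
        by (cases "q = \<iota> j") (auto simp: Gw_Suc xs S opAstar_def stp_def tp_Cons tp_def[of _ "Suc j"] rn)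
    next
      case KDs
      show ?thesis
        using IH[OF sh] psi KDs
        by (cases "q = \<iota> j") (auto simp: Gw_Suc xs S opDstar_def stp_def tp_Cons tp_def[of _ "Suc j"] rn)
    next
      case KA
      define T where "T = touches \<kappa> (Suc j) n 0"
      define C where "C = val \<sigma> \<kappa> \<iota> k (Suc j) n ((j, \<iota> j, False)#S) * tp \<kappa> j (Suc n) xs"
      have eq: "Gw \<psi> k (Suc j) n ((\<iota> j, False, s)#xs) * complex_of_real s = C * (complex_of_real s)^(Suc T)" for s
        using IH[OF shc2[of j "\<iota> j" False s]] KA
        by (simp add: C_def T_def tp_Cons tp_def[of _ j] algebra_simps)
      have "Gw \<psi> k j (Suc n) xs = (LINT s|\<sigma> (\<iota> j). C * (complex_of_real s)^(Suc T))"
        using psi KA proof -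
        have "xs \<noteq> []" using Cons by simp
        then show ?thesis using psi by (simp only: Gw_Suc opA_def eq if_False sem.simps KA)
      qed
      also have "\<dots> = C * mom \<sigma> (\<iota> j) (Suc T)" by (simp add: mom_def del: power_Suc)
      finally show ?thesis using KA by (simp add: C_def T_def S stp_def)
    next
      case KD
      define T where "T = touches \<kappa> (Suc j) n 0"
      define C where "C = val \<sigma> \<kappa> \<iota> k (Suc j) n ((j, \<iota> j, True)#S) * tp \<kappa> j (Suc n) xs"
      have eq: "Gw \<psi> k (Suc j) n ((\<iota> j, True, s)#xs) * complex_of_real s = C * (complex_of_real s)^(Suc T)" for s
        using IH[OF shc2[of j "\<iota> j" True s]] KD
        by (simp add: C_def T_def tp_Cons tp_def[of _ j] algebra_simps)
      have "Gw \<psi> k j (Suc n) xs = (LINT s|\<sigma> (\<iota> j). C * (complex_of_real s)^(Suc T))"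
        using psi KD proof -
        have "xs \<noteq> []" using Cons by simp
        then show ?thesis using psi by (simp only: Gw_Suc opD_def eq if_False sem.simps KD)
      qed
      also have "\<dots> = C * mom \<sigma> (\<iota> j) (Suc T)" by (simp add: mom_def del: power_Suc)
      finally show ?thesis using KD by (simp add: C_def T_def S stp_def)
    qed
  qed
qed
lemma distr_uminus_sym:
  fixes M :: "real measure"
  assumes sets: "sets M = sets borel"
    and sym: "\<And>A. A \<in> sets borel \<Longrightarrow> emeasure M (uminus ` A) = emeasure M A"
  shows "distr M borel uminus = M"
proof (rule measure_eqI)
  show "sets (distr M borel uminus) = sets M" using sets by simp
next
  fix A assume "A \<in> sets (distr M borel uminus)"
  then have A: "A \<in> sets borel" by simp
  have sp: "space M = UNIV" using sets_eq_imp_space_eq[OF sets] by simp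
  have "uminus -` A \<inter> space M = uminus ` A"
    by (auto simp: sp image_iff) (metis minus_minus)
  moreover have "uminus \<in> measurable M borel"
    using sets by (simp add: measurable_cong_sets[OF sets refl])
  ultimately show "emeasure (distr M borel uminus) A = emeasure M A"
    using A sym[OF A] by (simp add: emeasure_distr)
qed

lemma mom_odd:
  fixes M :: "real measure"
  assumes sets: "sets M = sets borel"
    and sym: "\<And>A. A \<in> sets borel \<Longrightarrow> emeasure M (uminus ` A) = emeasure M A"
    and odd: "odd m"
  shows "(LINT s|M. (complex_of_real s) ^ m) = 0"
proof -
  let ?f = "\<lambda>s::real. (complex_of_real s) ^ m"
  have fm: "?f \<in> borel_measurable borel" by measurable
  have um: "uminus \<in> measurable M borel"
    by (simp add: measurable_cong_sets[OF sets refl])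
  have "integral\<^sup>L M ?f = integral\<^sup>L (distr M borel uminus) ?f"
    using distr_uminus_sym[OF sets sym] by simp
  also have "\<dots> = integral\<^sup>L M (\<lambda>s. ?f (- s))"
    by (rule integral_distr[OF um fm])
  also have "\<dots> = integral\<^sup>L M (\<lambda>s. - ?f s)"
    using odd by (simp add: power_minus_odd)
  also have "\<dots> = - integral\<^sup>L M ?f" by simp
  finally show ?thesis by simp
qed

lemma final_analytic:
  fixes W :: fvec and V :: "bool \<Rightarrow> complex"
  assumes sets: "sets (\<sigma> k') = sets borel"
    and sym: "\<And>A. A \<in> sets borel \<Longrightarrow> emeasure (\<sigma> k') (uminus ` A) = emeasure (\<sigma> k') A"
    and fin: "finite_measure (\<sigma> k')"
    and W: "\<And>b x. W [(k',b,x)] = V b * (complex_of_real x) ^ T"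
    and nz: "fock_inner \<sigma> N W (eta k') \<noteq> 0"
  shows "\<exists>b. V b \<noteq> 0 \<and> even T"
proof -
  have d0: "deg_inner \<sigma> N (Suc n) W (eta k') = 0" if n0: "n \<notin> {0}" for n
  proof -
    have "eta k' (map (\<lambda>i. (ks ! i, bs ! i, x i)) [0..<Suc n]) = 0" for ks bs and x :: "nat \<Rightarrow> real"
    proof -
      have "length (map (\<lambda>i. (ks ! i, bs ! i, x i)) [0..<Suc n]) = Suc n" by simp
      then obtain a c rest where "map (\<lambda>i. (ks ! i, bs ! i, x i)) [0..<Suc n] = a # c # rest"
        using n0 by (cases "map (\<lambda>i. (ks ! i, bs ! i, x i)) [0..<Suc n]" rule: remdups_adj.cases) auto
      then show ?thesis by (simp add: eta_def)
    qed
    then show ?thesis by (simp add: deg_inner_def)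
  qed
  have "fock_inner \<sigma> N W (eta k') = deg_inner \<sigma> N (Suc 0) W (eta k')"
    unfolding fock_inner_def using suminf_finite[of "{0}", OF _ d0] by simp
  with nz obtain ks bs where I:
    "(LINT x | PiM {..<Suc 0} (\<lambda>i. \<sigma> (ks ! i)).
          W [(ks ! 0, bs ! 0, x 0)] * cnj (eta k' [(ks ! 0, bs ! 0, x 0)])) \<noteq> 0"
    unfolding deg_inner_def by simp (meson sum.neutral)
  have q: "ks ! 0 = k'"
  proof (rule ccontr)
    assume "ks ! 0 \<noteq> k'"
    then have "(\<lambda>x::nat\<Rightarrow>real. W [(ks ! 0, bs ! 0, x 0)] * cnj (eta k' [(ks ! 0, bs ! 0, x 0)])) = (\<lambda>x. 0)"
      by (simp add: eta_def)
    with I show False by (simp only:) simp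
  qed
  interpret P: product_sigma_finite "\<lambda>i::nat. \<sigma> k'"
    unfolding product_sigma_finite_def using fin finite_measure.axioms(1) by blast
  have "PiM {..<Suc 0} (\<lambda>i. \<sigma> (ks ! i)) = PiM {0::nat} (\<lambda>i. \<sigma> k')"
    using q by (intro PiM_cong) auto
  with I q have I2: "V (bs ! 0) \<noteq> 0 \<and> (LINT x | PiM {0::nat} (\<lambda>i. \<sigma> k'). (complex_of_real (x 0)) ^ T) \<noteq> 0"
    by (simp add: W eta_def)
  have "(LINT x | PiM {0::nat} (\<lambda>i. \<sigma> k'). (complex_of_real (x 0)) ^ T) = (LINT s|\<sigma> k'. (complex_of_real s) ^ T)"
    by (rule P.product_integral_singleton) (simp add: measurable_cong_sets[OF sets refl])
  with I2 have "V (bs ! 0) \<noteq> 0" and "(LINT s|\<sigma> k'. (complex_of_real s) ^ T) \<noteq> 0" by auto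
  moreover have "even T" using mom_odd[OF sets sym] calculation(2) by blast
  ultimately show ?thesis by blast
qed


fun run :: "(nat \<Rightarrow> kind) \<Rightarrow> (nat \<Rightarrow> nat) \<Rightarrow> nat \<Rightarrow> nat \<Rightarrow> sstack \<Rightarrow> sstack option" where
  "run \<kappa> \<iota> j 0 S = Some S"
| "run \<kappa> \<iota> j (Suc n) S = (case stp \<kappa> \<iota> j S of None \<Rightarrow> None | Some S' \<Rightarrow> run \<kappa> \<iota> (Suc j) n S')"

lemma run_add: "run \<kappa> \<iota> j (m + l) S = (case run \<kappa> \<iota> j m S of None \<Rightarrow> None | Some S' \<Rightarrow> run \<kappa> \<iota> (j + m) l S')"
  by (induction m arbitrary: j S) (auto split: option.splits)

lemma run_snoc: "run \<kappa> \<iota> j (Suc n) S = (case run \<kappa> \<iota> j n S of None \<Rightarrow> None | Some S' \<Rightarrow> stp \<kappa> \<iota> (j + n) S')"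
  using run_add[of \<kappa> \<iota> j n 1 S] by (auto split: option.splits)

lemma val_nz:
  assumes "val \<sigma> \<kappa> \<iota> k j n S \<noteq> 0"
  shows "(\<exists>S'. run \<kappa> \<iota> j n S = Some S' \<and> length S' = 1 \<and> fst (snd (hd S')) = k) \<and>
     (\<forall>m<n. ispush (\<kappa> (j+m)) \<longrightarrow> mom \<sigma> (\<iota> (j+m)) (Suc (touches \<kappa> (Suc (j+m)) (n - Suc m) 0)) \<noteq> 0)"
  using assms
proof (induction n arbitrary: j S)
  case 0
  then show ?case by (auto split: if_splits)
next
  case (Suc n)
  then obtain S' where st: "stp \<kappa> \<iota> j S = Some S'"
    and nz: "(if ispush (\<kappa> j) then mom \<sigma> (\<iota> j) (Suc (touches \<kappa> (Suc j) n 0)) else 1) * val \<sigma> \<kappa> \<iota> k (Suc j) n S' \<noteq> 0"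
    by (auto split: option.splits)
  from nz have v: "val \<sigma> \<kappa> \<iota> k (Suc j) n S' \<noteq> 0" by auto
  note IH = Suc.IH[OF v]
  have "\<forall>m<Suc n. ispush (\<kappa> (j+m)) \<longrightarrow> mom \<sigma> (\<iota> (j+m)) (Suc (touches \<kappa> (Suc (j+m)) (Suc n - Suc m) 0)) \<noteq> 0"
  proof (intro allI impI)
    fix m assume m: "m < Suc n" and p: "ispush (\<kappa> (j+m))"
    show "mom \<sigma> (\<iota> (j+m)) (Suc (touches \<kappa> (Suc (j+m)) (Suc n - Suc m) 0)) \<noteq> 0"
    proof (cases m)
      case 0 then show ?thesis using nz p by (auto split: if_splits)
    next
      case (Suc m') then show ?thesis using IH m p by auto
    qed
  qed
  then show ?case using IH st by simp
qed

definition sinv :: "(nat \<Rightarrow> kind) \<Rightarrow> nat \<Rightarrow> nat \<Rightarrow> sstack \<Rightarrow> bool" where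
  "sinv \<kappa> k' p S \<longleftrightarrow> S \<noteq> [] \<and> fst (last S) = 0 \<and> fst (snd (last S)) = k' \<and>
     sorted_wrt (>) (map fst S) \<and> (\<forall>x\<in>set (map fst S). x < p \<and> (x = 0 \<or> (1 \<le> x \<and> ispush (\<kappa> x))))"

lemma stp_sinv:
  assumes "stp \<kappa> \<iota> p S = Some S'" "sinv \<kappa> k' p S" "1 \<le> p"
  shows "sinv \<kappa> k' (Suc p) S'"
proof (cases "ispush (\<kappa> p)")
  case True
  then show ?thesis using assms apply (auto simp: stp_def sinv_def split: if_splits)
    apply (metis fst_conv less_Suc_eq)
    by (metis fst_conv not_gr0)
next
  case False
  then obtain X q f r where S: "S = (X,q,f)#r" using assms(1)
    by (cases S) (auto simp: stp_def)
  have c: "q = \<iota> p" "f = (\<not> epsk (\<kappa> p))" using assms(1) False S by (auto simp: stp_def split: if_splits)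
  show ?thesis
  proof (cases "ispop (\<kappa> p)")
    case True
    then have S': "S' = r" "r \<noteq> []" using assms(1) False S c by (auto simp: stp_def split: if_splits)
    have l: "last S = last r" using S S' by simp
    show ?thesis using assms(2) unfolding sinv_def S'(1) l
      using S S'(2) by auto
  next
    case np: False
    then have S': "S' = (X, q, epsk (\<kappa> p))#r" using assms(1) False S c by (auto simp: stp_def split: if_splits)
    have m: "map fst S' = map fst S" using S S' by simp
    have l: "fst (last S') = fst (last S) \<and> fst (snd (last S')) = fst (snd (last S))"
      using S S' by (cases r) auto
    show ?thesis using assms(2) unfolding sinv_def m using l S' by auto
  qed
qed


lemma sorted_hd_gt:
  fixes S :: sstack
  assumes "sorted_wrt (>) (map fst S)" "x \<in> set (map fst S)" "x \<noteq> fst (hd S)"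
  shows "x < fst (hd S)"
  using assms by (cases S) auto

lemma sorted_entry_hd:
  fixes S :: sstack
  assumes "sorted_wrt (>) (map fst S)" "(X,q,f) \<in> set S" "S \<noteq> []" "fst (hd S) = X"
  shows "hd S = (X,q,f)"
proof -
  obtain a r where S: "S = a # r" using assms(3) by (cases S) auto
  show ?thesis
  proof (rule ccontr)
    assume "hd S \<noteq> (X,q,f)"
    then have "(X,q,f) \<in> set r" using assms(2) S by auto
    then have "X \<in> set (map fst r)" by force
    then have "X < fst a" using assms(1) S by auto
    then show False using assms(4) S by simp
  qed
qed

locale crun =
  fixes \<kappa> :: "nat \<Rightarrow> kind" and \<iota> :: "nat \<Rightarrow> nat" and R k' :: nat and b0 :: bool
    and \<epsilon> :: "nat \<Rightarrow> bool"
  assumes R1: "1 \<le> R"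
    and valid: "run \<kappa> \<iota> 1 R [(0,k',b0)] \<noteq> None"
    and fin1: "length (the (run \<kappa> \<iota> 1 R [(0,k',b0)])) = 1"
    and k1: "\<not> ispush (\<kappa> 1)"
    and kR: "R = 1 \<or> \<not> ispop (\<kappa> R)"
    and evb: "even (touches \<kappa> 1 R 0)"
    and evp: "\<And>p. 1 \<le> p \<Longrightarrow> p \<le> R \<Longrightarrow> ispush (\<kappa> p) \<Longrightarrow> odd (touches \<kappa> (Suc p) (R - p) 0)"
    and eps: "\<And>p. 1 \<le> p \<Longrightarrow> p \<le> R \<Longrightarrow> \<epsilon> p = epsk (\<kappa> p)"
begin

definition st :: "nat \<Rightarrow> sstack" where "st p = the (run \<kappa> \<iota> 1 (p - 1) [(0,k',b0)])"
definition blk :: "nat \<Rightarrow> nat" where "blk p = (if ispush (\<kappa> p) then p else fst (hd (st p)))"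
definition Bk :: "nat \<Rightarrow> nat set" where "Bk X = {p. 1 \<le> p \<and> p \<le> R \<and> blk p = X}"

lemma run_ok: assumes "1 \<le> p" "p \<le> Suc R" shows "run \<kappa> \<iota> 1 (p - 1) [(0,k',b0)] = Some (st p)"
proof -
  have "run \<kappa> \<iota> 1 R [(0,k',b0)] = run \<kappa> \<iota> 1 ((p - 1) + (R - (p - 1))) [(0,k',b0)]" using assms by simp
  then show ?thesis using valid unfolding run_add st_def by (auto split: option.splits)
qed

lemma st1: "st 1 = [(0,k',b0)]" unfolding st_def by simp

lemma st_step: assumes "1 \<le> p" "p \<le> R" shows "stp \<kappa> \<iota> p (st p) = Some (st (Suc p))"
proof -
  have "run \<kappa> \<iota> 1 (Suc (p - 1)) [(0,k',b0)] = Some (st (Suc p))" using run_ok[of "Suc p"] assms by simp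
  then show ?thesis unfolding run_snoc using run_ok[of p] assms by simp
qed

lemma st_inv: assumes "1 \<le> p" "p \<le> Suc R" shows "sinv \<kappa> k' p (st p)"
  using assms
proof (induction p)
  case 0 then show ?case by simp
next
  case (Suc p)
  show ?case
  proof (cases "p = 0")
    case True then show ?thesis using st1 by (simp add: sinv_def)
  next
    case False
    then show ?thesis using Suc stp_sinv[OF st_step] by simp
  qed
qed

lemma stR: "st (Suc R) = the (run \<kappa> \<iota> 1 R [(0,k',b0)])" unfolding st_def by simp

lemma inv_facts: assumes "1 \<le> p" "p \<le> Suc R"
  shows "st p \<noteq> []" "sorted_wrt (>) (map fst (st p))"
    "\<And>x. x \<in> set (map fst (st p)) \<Longrightarrow> x < p \<and> (x = 0 \<or> (1 \<le> x \<and> ispush (\<kappa> x)))"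
    "fst (last (st p)) = 0" "fst (snd (last (st p))) = k'"
  using st_inv[OF assms] unfolding sinv_def by auto

lemma step_facts:
  assumes "1 \<le> p" "p \<le> R"
  shows "\<not> ispush (\<kappa> p) \<Longrightarrow> hd (st p) = (blk p, \<iota> p, \<not> epsk (\<kappa> p))"
    "\<not> ispush (\<kappa> p) \<Longrightarrow> \<not> ispop (\<kappa> p) \<Longrightarrow> st (Suc p) = (blk p, \<iota> p, epsk (\<kappa> p)) # tl (st p)"
    "ispop (\<kappa> p) \<Longrightarrow> st (Suc p) = tl (st p) \<and> tl (st p) \<noteq> []"
    "ispush (\<kappa> p) \<Longrightarrow> st (Suc p) = (p, \<iota> p, epsk (\<kappa> p)) # st p \<and> blk p = p"
proof -
  have s: "stp \<kappa> \<iota> p (st p) = Some (st (Suc p))" by (rule st_step[OF assms])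
  have ne: "st p \<noteq> []" using inv_facts(1) assms by simp
  obtain X q f r where S: "st p = (X,q,f)#r" using ne by (cases "st p") auto
  show "\<not> ispush (\<kappa> p) \<Longrightarrow> hd (st p) = (blk p, \<iota> p, \<not> epsk (\<kappa> p))"
    using s S by (auto simp: stp_def blk_def split: if_splits)
  show "\<not> ispush (\<kappa> p) \<Longrightarrow> \<not> ispop (\<kappa> p) \<Longrightarrow> st (Suc p) = (blk p, \<iota> p, epsk (\<kappa> p)) # tl (st p)"
    using s S by (auto simp: stp_def blk_def split: if_splits)
  show "ispop (\<kappa> p) \<Longrightarrow> st (Suc p) = tl (st p) \<and> tl (st p) \<noteq> []"
  proof -
    assume "ispop (\<kappa> p)"
    then have "\<not> ispush (\<kappa> p)" by (cases "\<kappa> p") auto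
    then show ?thesis using s S \<open>ispop (\<kappa> p)\<close> by (auto simp: stp_def split: if_splits)
  qed
  show "ispush (\<kappa> p) \<Longrightarrow> st (Suc p) = (p, \<iota> p, epsk (\<kappa> p)) # st p \<and> blk p = p"
    using s ne by (auto simp: stp_def blk_def split: if_splits)
qed


lemma hd_in: assumes "1 \<le> p" "p \<le> R" "\<not> ispush (\<kappa> p)"
  shows "blk p \<in> set (map fst (st p))" "fst (hd (st p)) = blk p" "blk p < p"
proof -
  have ne: "st p \<noteq> []" using inv_facts(1) assms by simp
  show "fst (hd (st p)) = blk p" using assms by (simp add: blk_def)
  then show "blk p \<in> set (map fst (st p))" using ne by (cases "st p") auto
  then show "blk p < p" using inv_facts(3)[of p] assms by auto
qed

lemma blk_le: assumes "1 \<le> p" "p \<le> R" shows "blk p \<le> p"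
proof (cases "ispush (\<kappa> p)")
  case True then show ?thesis by (simp add: blk_def)
next
  case False then show ?thesis using hd_in(3)[OF assms False] by simp
qed

lemma blk_cases: assumes "1 \<le> p" "p \<le> R"
  shows "blk p = 0 \<or> (1 \<le> blk p \<and> blk p \<le> R \<and> ispush (\<kappa> (blk p)) \<and> blk (blk p) = blk p)"
proof (cases "ispush (\<kappa> p)")
  case True then show ?thesis using assms by (simp add: blk_def)
next
  case False
  then have "blk p \<in> set (map fst (st p))" "blk p < p" using hd_in assms by auto
  then have "blk p = 0 \<or> (1 \<le> blk p \<and> ispush (\<kappa> (blk p)))" "blk p \<le> R"
    using inv_facts(3)[of p "blk p"] assms by auto
  moreover have "ispush (\<kappa> (blk p)) \<Longrightarrow> blk (blk p) = blk p" by (simp add: blk_def[of "blk p"])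
  ultimately show ?thesis by auto
qed

lemma entry_keep: assumes "1 \<le> p" "p \<le> R" "(X,q,f) \<in> set (st p)" "X \<noteq> blk p"
  shows "(X,q,f) \<in> set (st (Suc p))"
proof (cases "ispush (\<kappa> p)")
  case True then show ?thesis using step_facts(4)[OF assms(1,2)] assms(3) by simp
next
  case False
  have ne: "st p \<noteq> []" using inv_facts(1) assms by simp
  have "(X,q,f) \<noteq> hd (st p)" using step_facts(1)[OF assms(1,2) False] assms(4) by auto
  then have "(X,q,f) \<in> set (tl (st p))" using assms(3) ne by (cases "st p") auto
  then show ?thesis using step_facts(2,3)[OF assms(1,2)] False by (cases "ispop (\<kappa> p)") auto
qed

lemma ids_new: assumes "1 \<le> p" "p \<le> R" "X \<in> set (map fst (st (Suc p)))"
  shows "X \<in> set (map fst (st p)) \<or> X = p"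
proof (cases "ispush (\<kappa> p)")
  case True then show ?thesis using step_facts(4)[OF assms(1,2)] assms(3) by auto
next
  case False
  have ne: "st p \<noteq> []" using inv_facts(1) assms by simp
  have h: "fst (hd (st p)) = blk p" "blk p \<in> set (map fst (st p))" using hd_in assms False by auto
  have t: "set (map fst (tl (st p))) \<subseteq> set (map fst (st p))" using ne by (cases "st p") auto
  show ?thesis
  proof (cases "ispop (\<kappa> p)")
    case True then show ?thesis using step_facts(3)[OF assms(1,2)] assms(3) t by auto
  next
    case False': False
    then show ?thesis using step_facts(2)[OF assms(1,2) False False'] assms(3) t h by auto
  qed
qed

lemma popped: assumes "1 \<le> p" "p \<le> R" "ispop (\<kappa> p)"
  shows "blk p \<notin> set (map fst (st (Suc p)))"
proof -
  have np: "\<not> ispush (\<kappa> p)" using assms(3) by (cases "\<kappa> p") auto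
  have ne: "st p \<noteq> []" using inv_facts(1) assms by simp
  have so: "sorted_wrt (>) (map fst (st p))" using inv_facts(2) assms by simp
  have h: "fst (hd (st p)) = blk p" using hd_in assms np by auto
  have "st (Suc p) = tl (st p)" using step_facts(3)[OF assms] by simp
  then show ?thesis using so h ne by (cases "st p") auto
qed

lemma gone: assumes "1 \<le> p" "p \<le> R" "X \<in> set (map fst (st p))" "X \<notin> set (map fst (st (Suc p)))"
  shows "blk p = X \<and> ispop (\<kappa> p)"
proof -
  obtain q f where e: "(X,q,f) \<in> set (st p)" using assms(3) by auto
  have "X = blk p" using entry_keep[OF assms(1,2) e] assms(4) by force
  moreover have "ispop (\<kappa> p)"
  proof (rule ccontr)
    assume np: "\<not> ispop (\<kappa> p)"
    show False
    proof (cases "ispush (\<kappa> p)")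
      case True then show False using step_facts(4)[OF assms(1,2)] assms(3,4) by auto
    next
      case False then show False using step_facts(2)[OF assms(1,2) False np] \<open>X = blk p\<close> assms(4) by auto
    qed
  qed
  ultimately show ?thesis by simp
qed

lemma never_back: assumes "X \<notin> set (map fst (st p))" "X < p" "1 \<le> p" "p \<le> p'" "p' \<le> Suc R"
  shows "X \<notin> set (map fst (st p'))"
  using assms(4,5)
proof (induction p')
  case 0 then show ?case using assms by simp
next
  case (Suc p')
  show ?case
  proof (cases "p \<le> p'")
    case True
    then have "X \<notin> set (map fst (st p'))" using Suc by simp
    then show ?thesis using ids_new[of p' X] True assms(2,3) Suc.prems by auto
  next
    case False
    then have "p = Suc p'" using Suc.prems by simp
    then show ?thesis using assms(1) by simp
  qed
qed

lemma alive_between: assumes "X \<in> set (map fst (st p))" "X \<in> set (map fst (st p''))"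
  "1 \<le> p" "p \<le> p'" "p' \<le> p''" "p'' \<le> Suc R"
  shows "X \<in> set (map fst (st p'))"
proof (rule ccontr)
  assume a: "X \<notin> set (map fst (st p'))"
  have "X < p" using inv_facts(3)[of p X] assms by simp
  then show False using never_back[OF a, of p''] assms by simp
qed

lemma entry_persist: assumes "(X,q,f) \<in> set (st p)" "1 \<le> p" "p \<le> p''" "p'' \<le> Suc R"
  "\<And>p'. p \<le> p' \<Longrightarrow> p' < p'' \<Longrightarrow> blk p' \<noteq> X"
  shows "(X,q,f) \<in> set (st p'')"
  using assms(3,4,5)
proof (induction p'')
  case 0 then show ?case using assms by simp
next
  case (Suc p'')
  show ?case
  proof (cases "p \<le> p''")
    case True
    then have "(X,q,f) \<in> set (st p'')" using Suc by simp
    moreover have "X \<noteq> blk p''" using Suc.prems(3)[of p''] True by auto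
    moreover have "1 \<le> p''" "p'' \<le> R" using Suc.prems True assms(2) by auto
    ultimately show ?thesis using entry_keep[of p'' X q f] by blast
  next
    case False
    then have "p = Suc p''" using Suc.prems by simp
    then show ?thesis using assms(1) by simp
  qed
qed

lemma find_pop: assumes "X \<in> set (map fst (st p))" "X \<notin> set (map fst (st p''))"
  "1 \<le> p" "p \<le> p''" "p'' \<le> Suc R"
  shows "\<exists>p'. p \<le> p' \<and> p' < p'' \<and> blk p' = X \<and> ispop (\<kappa> p')"
  using assms(2,4,5)
proof (induction p'')
  case 0 then show ?case using assms by simp
next
  case (Suc p'')
  show ?case
  proof (cases "p \<le> p''")
    case True
    show ?thesis
    proof (cases "X \<in> set (map fst (st p''))")
      case True': True
      then show ?thesis using gone[of p'' X] Suc.prems True assms(3) by auto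
    next
      case False
      then show ?thesis using Suc True by auto
    qed
  next
    case False
    then have "p = Suc p''" using Suc.prems by simp
    then show ?thesis using assms(1) Suc.prems by simp
  qed
qed

lemma touch_keep: assumes "1 \<le> p" "p \<le> R" "\<not> ispop (\<kappa> p)"
  shows "(blk p, \<iota> p, epsk (\<kappa> p)) \<in> set (st (Suc p))"
  using step_facts(2,4)[OF assms(1,2)] assms(3) by (cases "ispush (\<kappa> p)") auto

lemma touch_later: assumes "1 \<le> p'" "p' \<le> R" "blk p' = X" "X < p'"
  shows "\<not> ispush (\<kappa> p') \<and> X \<in> set (map fst (st p')) \<and> fst (hd (st p')) = X"
proof -
  have "\<not> ispush (\<kappa> p')" using assms by (auto simp: blk_def)
  then show ?thesis using hd_in[OF assms(1,2)] assms(3) by auto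
qed

lemma no_pop_before: assumes "1 \<le> p" "p < p'" "p' \<le> R" "blk p = blk p'"
  shows "\<not> ispop (\<kappa> p)"
proof
  assume pp: "ispop (\<kappa> p)"
  have a: "blk p \<notin> set (map fst (st (Suc p)))" using popped[OF assms(1) _ pp] assms by simp
  have "blk p \<le> p" using blk_le[of p] assms by simp
  then have "blk p \<notin> set (map fst (st p'))" using never_back[OF a, of p'] assms by simp
  moreover have "blk p \<in> set (map fst (st p'))"
    using touch_later[of p' "blk p"] assms \<open>blk p \<le> p\<close> by simp
  ultimately show False by simp
qed


lemma noncross: assumes "1 \<le> a" "a < b" "b < c" "c < d" "d \<le> R"
  "blk a = X" "blk c = X" "blk b = Y" "blk d = Y" "X \<noteq> Y"
  shows False
proof -
  have Xa: "X \<le> a" using blk_le[of a] assms by simp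
  have Yb: "Y \<le> b" using blk_le[of b] assms by simp
  have Xc: "X \<in> set (map fst (st c))" "fst (hd (st c)) = X"
    using touch_later[of c X] assms Xa by auto
  have "\<not> ispop (\<kappa> a)" using no_pop_before[of a c] assms by simp
  then have "(X, \<iota> a, epsk (\<kappa> a)) \<in> set (st (Suc a))" using touch_keep[of a] assms by simp
  then have "X \<in> set (map fst (st (Suc a)))" by force
  then have Xb: "X \<in> set (map fst (st b))" using alive_between[of X "Suc a" c b] Xc assms by simp
  have Yd: "Y \<in> set (map fst (st d))" using touch_later[of d Y] assms Yb by auto
  have "\<not> ispop (\<kappa> b)" using no_pop_before[of b d] assms by simp
  then have "(Y, \<iota> b, epsk (\<kappa> b)) \<in> set (st (Suc b))" using touch_keep[of b] assms by simp
  then have "Y \<in> set (map fst (st (Suc b)))" by force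
  then have Yc: "Y \<in> set (map fst (st c))" using alive_between[of Y "Suc b" d c] Yd assms by simp
  have "X < Y"
  proof (cases "ispush (\<kappa> b)")
    case True
    then have "Y = b" using assms by (simp add: blk_def)
    then show ?thesis using inv_facts(3)[of b X] Xb assms by simp
  next
    case False
    then have "fst (hd (st b)) = Y" using hd_in[of b] assms by simp
    then show ?thesis using sorted_hd_gt[of "st b" X] inv_facts(2)[of b] Xb assms by simp
  qed
  moreover have "Y < X" using sorted_hd_gt[of "st c" Y] inv_facts(2)[of c] Yc Xc assms by simp
  ultimately show False by simp
qed

lemma consec: assumes "1 \<le> p" "p < p'" "p' \<le> R" "blk p = blk p'"
  "\<And>p''. p < p'' \<Longrightarrow> p'' < p' \<Longrightarrow> blk p'' \<noteq> blk p"
  shows "\<iota> p = \<iota> p' \<and> epsk (\<kappa> p) \<noteq> epsk (\<kappa> p')"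
proof -
  define X where "X = blk p"
  have np: "\<not> ispop (\<kappa> p)" using no_pop_before[of p p'] assms by simp
  then have e1: "(X, \<iota> p, epsk (\<kappa> p)) \<in> set (st (Suc p))" using touch_keep[of p] assms X_def by simp
  have e2: "(X, \<iota> p, epsk (\<kappa> p)) \<in> set (st p')"
    by (rule entry_persist[OF e1]) (use assms X_def in auto)
  have Xl: "X < p'" using blk_le[of p] assms X_def by simp
  have t: "\<not> ispush (\<kappa> p')" "fst (hd (st p')) = X" using touch_later[of p' X] assms Xl X_def by auto
  have "hd (st p') = (X, \<iota> p, epsk (\<kappa> p))"
    using sorted_entry_hd[OF _ e2] inv_facts(1,2)[of p'] assms t by simp
  moreover have "hd (st p') = (blk p', \<iota> p', \<not> epsk (\<kappa> p'))" using step_facts(1)[of p'] assms t by simp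
  ultimately show ?thesis by simp
qed

lemma card_split: "card {p'. p \<le> p' \<and> p' \<le> (R'::nat) \<and> g p' = Z} =
   (if p \<le> R' \<and> g p = Z then 1 else 0) + card {p'. Suc p \<le> p' \<and> p' \<le> R' \<and> g p' = Z}"
proof (cases "p \<le> R' \<and> g p = Z")
  case True
  then have "{p'. p \<le> p' \<and> p' \<le> R' \<and> g p' = Z} = insert p {p'. Suc p \<le> p' \<and> p' \<le> R' \<and> g p' = Z}"
    by auto
  moreover have "finite {p'. Suc p \<le> p' \<and> p' \<le> R' \<and> g p' = Z}" by (rule finite_subset[of _ "{..R'}"]) auto
  ultimately show ?thesis using True by simp
next
  case False
  then have "{p'. p \<le> p' \<and> p' \<le> R' \<and> g p' = Z} = {p'. Suc p \<le> p' \<and> p' \<le> R' \<and> g p' = Z}"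
    using le_antisym not_less_eq_eq by (auto, fastforce)
  then show ?thesis using False by simp
qed

lemma bridge: "p + n = Suc R \<Longrightarrow> 1 \<le> p \<Longrightarrow> i < length (st p) \<Longrightarrow>
   touches \<kappa> p n i = card {p'. p \<le> p' \<and> p' \<le> R \<and> blk p' = fst (st p ! i)}"
proof (induction n arbitrary: p i)
  case 0
  then have "{p'. p \<le> p' \<and> p' \<le> R \<and> blk p' = fst (st p ! i)} = {}" by auto
  then show ?case by simp
next
  case (Suc n)
  have pR: "p \<le> R" "Suc p + n = Suc R" "1 \<le> Suc p" using Suc.prems by auto
  have so: "sorted_wrt (>) (map fst (st p))" using inv_facts(2)[of p] Suc.prems by simp
  have lt: "\<And>x. x \<in> set (map fst (st p)) \<Longrightarrow> x < p" using inv_facts(3)[of p] Suc.prems by simp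
  note cs = card_split[of p R blk]
  have ne: "st p \<noteq> []" using inv_facts(1)[of p] Suc.prems by simp
  show ?case
  proof (cases "ispush (\<kappa> p)")
    case True
    have S': "st (Suc p) = (p, \<iota> p, epsk (\<kappa> p)) # st p" "blk p = p" using step_facts(4)[of p] pR Suc.prems True by auto
    have "fst (st p ! i) \<in> set (map fst (st p))" using Suc.prems(3) by (metis length_map nth_map nth_mem)
    then have "blk p \<noteq> fst (st p ! i)" using lt S'(2) by force
    then show ?thesis using Suc.IH[OF pR(2,3), of "Suc i"] Suc.prems(3) True S'(1) cs by simp
  next
    case False
    have h: "fst (hd (st p)) = blk p" using hd_in[of p] pR Suc.prems False by simp
    have dist: "0 < i \<Longrightarrow> blk p \<noteq> fst (st p ! i)"
    proof -
      assume "0 < i"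
      then have "fst (st p ! i) < fst (st p ! 0)"
        using sorted_wrt_nth_less[OF so, of 0 i] Suc.prems(3) ne by (simp add: nth_map[of 0])
      then show ?thesis using h ne by (simp add: hd_conv_nth)
    qed
    show ?thesis
    proof (cases "ispop (\<kappa> p)")
      case True
      have S': "st (Suc p) = tl (st p)" using step_facts(3)[of p] pR Suc.prems True by auto
      show ?thesis
      proof (cases i)
        case 0
        have "{p'. Suc p \<le> p' \<and> p' \<le> R \<and> blk p' = blk p} = {}"
          using no_pop_before[of p] True Suc.prems by (auto simp: Suc_le_eq) (metis)
        then show ?thesis using 0 h ne True False cs pR by (simp add: hd_conv_nth)
      next
        case (Suc i')
        have "tl (st p) ! i' = st p ! i" using Suc ne by (cases "st p") auto
        then show ?thesis using Suc.IH[OF pR(2,3), of i'] Suc.prems(3) True False S' cs dist Suc pR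
          by simp
      qed
    next
      case np: False
      have S': "st (Suc p) = (blk p, \<iota> p, epsk (\<kappa> p)) # tl (st p)" using step_facts(2)[of p] pR Suc.prems False np by auto
      have same: "st (Suc p) ! i = (if i = 0 then (blk p, \<iota> p, epsk (\<kappa> p)) else st p ! i)"
        using S' ne by (cases i; cases "st p") auto
      have len: "length (st (Suc p)) = length (st p)" using S' ne by simp
      show ?thesis
      proof (cases i)
        case 0
        then show ?thesis using Suc.IH[OF pR(2,3), of 0] same len Suc.prems(3) False np cs h ne pR
          by (simp add: hd_conv_nth)
      next
        case (Suc i')
        then show ?thesis using Suc.IH[OF pR(2,3), of i] same len Suc.prems(3) False np cs dist pR by simp
      qed
    qed
  qed
qed


lemma bottom:
  shows "\<not> ispush (\<kappa> 1) \<and> \<not> ispop (\<kappa> 1) \<and> blk 1 = 0 \<and> \<iota> 1 = k'"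
    and "\<not> ispush (\<kappa> R) \<and> \<not> ispop (\<kappa> R) \<and> blk R = 0 \<and> \<iota> R = k'"
    and "fst (snd (hd (st (Suc R)))) = k'"
proof -
  have np1: "\<not> ispop (\<kappa> 1)" using step_facts(3)[of 1] R1 st1 by auto
  have h1: "hd (st 1) = (blk 1, \<iota> 1, \<not> epsk (\<kappa> 1))" using step_facts(1)[of 1] R1 k1 by simp
  have "(blk 1, \<iota> 1, \<not> epsk (\<kappa> 1)) = (0, k', b0)" by (metis h1 st1 list.sel(1))
  then have "blk 1 = 0" "\<iota> 1 = k'" by (simp_all only: prod.inject)
  then show "\<not> ispush (\<kappa> 1) \<and> \<not> ispop (\<kappa> 1) \<and> blk 1 = 0 \<and> \<iota> 1 = k'" using k1 np1 by blast
  have len: "length (st (Suc R)) = 1" using fin1 stR by simp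
  have neR: "st R \<noteq> []" using inv_facts(1)[of R] R1 by simp
  have npR: "\<not> ispush (\<kappa> R)" using step_facts(4)[of R] R1 len neR by auto
  have npoR: "\<not> ispop (\<kappa> R)" using kR np1 by auto
  have sR: "st (Suc R) = (blk R, \<iota> R, epsk (\<kappa> R)) # tl (st R)" using step_facts(2)[of R] R1 npR npoR by simp
  then have "tl (st R) = []" using len by (metis length_Cons length_0_conv diff_Suc_1 One_nat_def)
  then have "last (st R) = hd (st R)" using neR by (cases "st R") auto
  moreover have "hd (st R) = (blk R, \<iota> R, \<not> epsk (\<kappa> R))" using step_facts(1)[of R] R1 npR by simp
  ultimately have "blk R = 0" "\<iota> R = k'" using inv_facts(4,5)[of R] R1 by auto
  then show "\<not> ispush (\<kappa> R) \<and> \<not> ispop (\<kappa> R) \<and> blk R = 0 \<and> \<iota> R = k'" using npR npoR by simp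
  show "fst (snd (hd (st (Suc R)))) = k'" using sR \<open>\<iota> R = k'\<close> by simp
qed

lemma Bk_ge: "p \<in> Bk X \<Longrightarrow> X \<le> p" using blk_le unfolding Bk_def by auto

lemma finite_Bk: "finite (Bk X)" unfolding Bk_def by (rule finite_subset[of _ "{..R}"]) auto

lemma even_block: assumes "1 \<le> j" "j \<le> R" shows "even (card (Bk (blk j)))"
proof (cases "blk j = 0")
  case True
  have "touches \<kappa> 1 R 0 = card {p'. 1 \<le> p' \<and> p' \<le> R \<and> blk p' = fst (st 1 ! 0)}"
    using bridge[of 1 R 0] st1 by simp
  then show ?thesis using True evb st1 by (simp add: Bk_def)
next
  case False
  define X where "X = blk j"
  have X: "1 \<le> X" "X \<le> R" "ispush (\<kappa> X)" "blk X = X" using blk_cases[OF assms] False X_def by auto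
  have s: "st (Suc X) = (X, \<iota> X, epsk (\<kappa> X)) # st X" using step_facts(4)[of X] X by simp
  have "touches \<kappa> (Suc X) (R - X) 0 = card {p'. Suc X \<le> p' \<and> p' \<le> R \<and> blk p' = fst (st (Suc X) ! 0)}"
    using bridge[of "Suc X" "R - X" 0] X s by simp
  then have o: "odd (card {p'. Suc X \<le> p' \<and> p' \<le> R \<and> blk p' = X})" using evp[of X] X s by simp
  have "Bk X = {p'. X \<le> p' \<and> p' \<le> R \<and> blk p' = X}" using Bk_ge[of _ X] X(1) unfolding Bk_def by auto
  then have "card (Bk X) = 1 + card {p'. Suc X \<le> p' \<and> p' \<le> R \<and> blk p' = X}"
    using card_split[of X R blk X] X by simp
  then show ?thesis using o X_def by simp
qed

definition \<pi> :: "nat set set" where "\<pi> = (\<lambda>j. Bk (blk j)) ` {1..R}"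

lemma in_Bk_self: "1 \<le> j \<Longrightarrow> j \<le> R \<Longrightarrow> j \<in> Bk (blk j)" by (simp add: Bk_def)

lemma block_of_eq: assumes "1 \<le> j" "j \<le> R" shows "block_of \<pi> j = Bk (blk j)"
  unfolding block_of_def
proof (rule the_equality)
  show "Bk (blk j) \<in> \<pi> \<and> j \<in> Bk (blk j)" using assms in_Bk_self by (auto simp: \<pi>_def)
next
  fix B assume "B \<in> \<pi> \<and> j \<in> B"
  then show "B = Bk (blk j)" by (auto simp: \<pi>_def Bk_def)
qed

lemma partition: "partition_on {1..R} \<pi>"
proof (rule partition_onI)
  show "\<Union>\<pi> = {1..R}" using in_Bk_self by (auto simp: \<pi>_def Bk_def)
  show "{} \<notin> \<pi>"
  proof
    assume "{} \<in> \<pi>"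
    then obtain j where "1 \<le> j" "j \<le> R" "{} = Bk (blk j)" by (auto simp: \<pi>_def)
    then show False using in_Bk_self by blast
  qed
  fix p q assume "p \<in> \<pi>" "q \<in> \<pi>" "p \<noteq> q"
  then show "disjnt p q" by (auto simp: \<pi>_def Bk_def disjnt_def)
qed

lemma NC_pi: "NC R \<pi>"
  unfolding NC_def
proof (intro conjI partition ballI impI notI)
  fix B1 B2 assume B: "B1 \<in> \<pi>" "B2 \<in> \<pi>" "B1 \<noteq> B2"
    and ex: "\<exists>a b c d. a < b \<and> b < c \<and> c < d \<and> a \<in> B1 \<and> c \<in> B1 \<and> b \<in> B2 \<and> d \<in> B2"
  obtain j1 j2 where j: "B1 = Bk (blk j1)" "B2 = Bk (blk j2)" using B by (auto simp: \<pi>_def)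
  then have ne: "blk j1 \<noteq> blk j2" using B by auto
  from ex obtain a b c d where abcd: "a < b" "b < c" "c < d" "a \<in> B1" "c \<in> B1" "b \<in> B2" "d \<in> B2" by blast
  show False
    using noncross[of a b c d "blk j1" "blk j2"] abcd ne unfolding j Bk_def by auto
qed

lemma NC_irr_pi: "NC_irr R \<pi>"
  unfolding NC_irr_def
proof (intro conjI NC_pi bexI)
  show "Bk (blk 1) \<in> \<pi>" using R1 by (auto simp: \<pi>_def)
  show "1 \<in> Bk (blk 1)" using R1 in_Bk_self by simp
  show "R \<in> Bk (blk 1)" using bottom R1 by (simp add: Bk_def)
qed


lemma block_ok_pi: assumes "B \<in> \<pi>" shows "block_ok \<iota> \<epsilon> B"
proof -
  obtain j where j: "1 \<le> j" "j \<le> R" "B = Bk (blk j)" using assms by (auto simp: \<pi>_def)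
  define X where "X = blk j"
  define qs where "qs = sorted_list_of_set B"
  have fin: "finite B" using j finite_Bk by simp
  have sq: "sorted_wrt (<) qs" unfolding qs_def by (rule strict_sorted_list_of_set)
  have setq: "set qs = B" unfolding qs_def using fin by simp
  have lenq: "length qs = card B" unfolding qs_def by simp
  have memB: "\<And>p. p \<in> B \<longleftrightarrow> 1 \<le> p \<and> p \<le> R \<and> blk p = X" using j X_def by (simp add: Bk_def)
  have qin: "\<And>i. i < length qs \<Longrightarrow> qs ! i \<in> B" using setq nth_mem by blast
  have cons: "\<iota> (qs!i) = \<iota> (qs!Suc i) \<and> \<epsilon> (qs!i) \<noteq> \<epsilon> (qs!Suc i)" if si: "Suc i < length qs" for i
  proof -
    have lt: "qs!i < qs!Suc i" using sorted_wrt_nth_less[OF sq, of i "Suc i"] si by simp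
    have m1: "1 \<le> qs!i" "qs!i \<le> R" "blk (qs!i) = X" using memB qin[of i] si by auto
    have m2: "1 \<le> qs!Suc i" "qs!Suc i \<le> R" "blk (qs!Suc i) = X" using memB qin[of "Suc i"] si by auto
    have btw: "blk p'' \<noteq> blk (qs!i)" if b1: "qs!i < p''" and b2: "p'' < qs!Suc i" for p''
    proof
      assume "blk p'' = blk (qs!i)"
      then have "p'' \<in> B" using memB m1 m2 b1 b2 by auto
      then obtain m where m: "m < length qs" "qs!m = p''" using setq by (metis in_set_conv_nth)
      consider "m < i" | "m = i" | "m = Suc i" | "Suc i < m" by linarith
      then show False
      proof cases
        case 1 then show False using sorted_wrt_nth_less[OF sq, of m i] si m b1 by simp
      next
        case 2 then show False using m b1 by simp
      next
        case 3 then show False using m b2 by simp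
      next
        case 4 then show False using sorted_wrt_nth_less[OF sq, of "Suc i" m] si m b2 by simp
      qed
    qed
    have "\<iota> (qs!i) = \<iota> (qs!Suc i) \<and> epsk (\<kappa> (qs!i)) \<noteq> epsk (\<kappa> (qs!Suc i))"
      using consec[of "qs!i" "qs!Suc i"] m1 m2 lt btw by simp
    then show ?thesis using eps m1 m2 by simp
  qed
  have iot: "\<forall>i<length qs. \<iota> (qs!i) = \<iota> (qs!0)"
  proof (intro allI impI)
    fix i show "i < length qs \<Longrightarrow> \<iota> (qs!i) = \<iota> (qs!0)"
      by (induction i) (use cons in auto)
  qed
  have alt: "\<forall>i<length qs. \<epsilon> (qs!i) = (\<epsilon> (qs!0) = even i)"
  proof (intro allI impI)
    fix i show "i < length qs \<Longrightarrow> \<epsilon> (qs!i) = (\<epsilon> (qs!0) = even i)"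
    proof (induction i)
      case 0 then show ?case by simp
    next
      case (Suc i) then show ?case using cons[of i] by auto
    qed
  qed
  have ev: "even (length qs)" using lenq even_block[OF j(1,2)] j X_def by simp
  have ne: "qs \<noteq> []" using setq in_Bk_self[OF j(1,2)] j by auto
  then have pos: "0 < length qs" by simp
  have hdq: "hd qs = qs!0" using ne by (simp add: hd_conv_nth)
  have lastq: "last qs = qs!(length qs - 1)" using ne by (simp add: last_conv_nth)
  have "odd (length qs - 1)" using ev pos by simp
  then have "\<epsilon> (last qs) \<noteq> \<epsilon> (hd qs)" using alt[rule_format, of "length qs - 1"] pos hdq lastq by simp
  then show ?thesis unfolding block_ok_def Let_def qs_def[symmetric]
    using iot cons hdq by auto
qed

lemma Min_push: assumes "1 \<le> j" "j \<le> R" "ispush (\<kappa> j)" shows "Min (block_of \<pi> j) = j"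
proof -
  have b: "blk j = j" using assms by (simp add: blk_def)
  show ?thesis unfolding block_of_eq[OF assms(1,2)] b
    by (rule Min_eqI) (use finite_Bk Bk_ge in_Bk_self[OF assms(1,2)] b in auto)
qed

lemma Min_nonpush: assumes "2 \<le> j" "j \<le> R" "\<not> ispush (\<kappa> j)" shows "Min (block_of \<pi> j) \<noteq> j"
proof -
  have j1: "1 \<le> j" using assms by simp
  define X where "X = blk j"
  have "\<exists>m\<in>Bk X. m < j"
  proof (cases "X = 0")
    case True
    then have "1 \<in> Bk X" using bottom(1) R1 by (simp add: Bk_def)
    moreover have "1 < j" using assms by simp
    ultimately show ?thesis by (metis One_nat_def)
  next
    case False
    then have X: "1 \<le> X" "X \<le> R" "blk X = X" using blk_cases[OF j1 assms(2)] X_def by auto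
    then have "X \<in> Bk X" by (simp add: Bk_def)
    moreover have "X < j" using hd_in(3)[OF j1 assms(2,3)] X_def by simp
    ultimately show ?thesis by auto
  qed
  then obtain m where "m \<in> Bk X" "m < j" by blast
  then have "Min (Bk X) < j" using Min_le[OF finite_Bk] by (meson le_less_trans)
  then show ?thesis unfolding block_of_eq[OF j1 assms(2)] X_def by simp
qed

lemma Max_pop: assumes "1 \<le> j" "j \<le> R" "ispop (\<kappa> j)" shows "Max (block_of \<pi> j) = j"
proof -
  have "\<forall>p\<in>Bk (blk j). p \<le> j"
  proof
    fix p assume p: "p \<in> Bk (blk j)"
    show "p \<le> j"
    proof (rule ccontr)
      assume "\<not> p \<le> j"
      then show False using no_pop_before[of j p] p assms by (auto simp: Bk_def)
    qed
  qed
  then show ?thesis unfolding block_of_eq[OF assms(1,2)]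
    by (intro Max_eqI) (use finite_Bk in_Bk_self[OF assms(1,2)] in auto)
qed

lemma Max_M: assumes "1 \<le> j" "j \<le> R - 1" "\<not> ispush (\<kappa> j)" "\<not> ispop (\<kappa> j)"
  shows "Max (block_of \<pi> j) \<noteq> j"
proof -
  have jR: "j \<le> R" "j < R" using assms R1 by auto
  define X where "X = blk j"
  have "\<exists>m\<in>Bk X. j < m"
  proof (cases "X = 0")
    case True
    then have "R \<in> Bk X" using bottom(2) R1 by (simp add: Bk_def)
    then show ?thesis using jR by auto
  next
    case False
    have "(X, \<iota> j, epsk (\<kappa> j)) \<in> set (st (Suc j))" using touch_keep[of j] assms jR X_def by simp
    then have a: "X \<in> set (map fst (st (Suc j)))" by force
    have "st (Suc R) = [hd (st (Suc R))]"
      using fin1 stR by (metis One_nat_def length_0_conv length_Suc_conv list.sel(1))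
    moreover have "fst (last (st (Suc R))) = 0" using inv_facts(4)[of "Suc R"] by simp
    ultimately have "set (map fst (st (Suc R))) = {0}" by (metis last_ConsL list.set(1) list.set(2) list.simps(8) list.simps(9))
    then have "X \<notin> set (map fst (st (Suc R)))" using False by simp
    then obtain p' where "Suc j \<le> p'" "p' < Suc R" "blk p' = X"
      using find_pop[OF a, of "Suc R"] jR by auto
    then have "p' \<in> Bk X" "j < p'" by (auto simp: Bk_def)
    then show ?thesis by auto
  qed
  then obtain m where "m \<in> Bk X" "j < m" by blast
  then have "j < Max (Bk X)" using Max_ge[OF finite_Bk] by (meson less_le_trans)
  then show ?thesis unfolding block_of_eq[OF assms(1) jR(1)] X_def by simp
qed

end

theorem lemma4p3:
  fixes \<sigma> :: "nat \<Rightarrow> real measure" and N R k k' :: nat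
    and \<epsilon> :: "nat \<Rightarrow> bool" and \<iota> :: "nat \<Rightarrow> nat" and \<psi> :: "nat \<Rightarrow> fvec \<Rightarrow> fvec"
  assumes meas: "\<And>q. q \<in> {1..N} \<Longrightarrow> sets (\<sigma> q) = sets borel"
    and fin: "\<And>q. q \<in> {1..N} \<Longrightarrow> finite_measure (\<sigma> q)"
    and cpt: "\<And>q. q \<in> {1..N} \<Longrightarrow> \<exists>C. compact C \<and> emeasure (\<sigma> q) (- C) = 0"
    and sym: "\<And>q A. q \<in> {1..N} \<Longrightarrow> A \<in> sets borel \<Longrightarrow>
                 emeasure (\<sigma> q) (uminus ` A) = emeasure (\<sigma> q) A"
    and R: "1 \<le> R"
    and iota: "\<And>j. j \<in> {1..R} \<Longrightarrow> \<iota> j \<in> {1..N}"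
    and a: "\<psi> 1 \<in> (if \<epsilon> 1 then {opM (\<iota> 1), opAstar (\<iota> 1)}
                   else {opMstar (\<iota> 1), opDstar (\<iota> 1)})"
    and b: "\<psi> R \<in> (if \<epsilon> R then {opM (\<iota> R), opD \<sigma> (\<iota> R)}
                   else {opMstar (\<iota> R), opA \<sigma> (\<iota> R)})"
    and c: "\<And>j. 2 \<le> j \<Longrightarrow> j \<le> R - 1 \<Longrightarrow>
              \<psi> j \<in> {Mpow (\<iota> j) (\<epsilon> j), Astarpow \<sigma> (\<iota> j) (\<epsilon> j), Dpow \<sigma> (\<iota> j) (\<epsilon> j)}"
    and k: "k \<in> {1..N}" and k': "k' \<in> {1..N}"
    and nz: "fock_inner \<sigma> N (apply_word \<psi> R (eta k)) (eta k') \<noteq> 0"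
  shows "k = k' \<and> k' = \<iota> 1 \<and> \<iota> 1 = \<iota> R \<and>
         (\<exists>\<pi>. NC R \<pi> \<and> NC_irr R \<pi> \<and> (\<forall>B\<in>\<pi>. block_ok \<iota> \<epsilon> B) \<and>
              (\<forall>j\<in>{1..R}. \<psi> j = phi \<sigma> R \<iota> \<epsilon> \<pi> j))"
proof -
  have chooseK: "\<forall>j\<in>{1..R}. \<exists>kk. \<psi> j = sem \<sigma> kk (\<iota> j) \<and> epsk kk = \<epsilon> j \<and>
      (j = 1 \<longrightarrow> \<not> ispush kk) \<and> (j = R \<longrightarrow> R = 1 \<or> \<not> ispop kk)"
  proof
    fix j assume j: "j \<in> {1..R}"
    consider "j = 1" | "j \<noteq> 1" "j = R" | "2 \<le> j" "j \<le> R - 1" using j by fastforce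
    then show "\<exists>kk. \<psi> j = sem \<sigma> kk (\<iota> j) \<and> epsk kk = \<epsilon> j \<and>
      (j = 1 \<longrightarrow> \<not> ispush kk) \<and> (j = R \<longrightarrow> R = 1 \<or> \<not> ispop kk)"
    proof cases
      case 1
      show ?thesis
      proof (cases "\<epsilon> 1")
        case True
        then have "\<psi> 1 = opM (\<iota> 1) \<or> \<psi> 1 = opAstar (\<iota> 1)" using a by simp
        then show ?thesis
        proof
          assume "\<psi> 1 = opM (\<iota> 1)" then show ?thesis using 1 True by (intro exI[of _ KM]) auto
        next
          assume "\<psi> 1 = opAstar (\<iota> 1)" then show ?thesis using 1 True R by (intro exI[of _ KAs]) auto
        qed
      next
        case False
        then have "\<psi> 1 = opMstar (\<iota> 1) \<or> \<psi> 1 = opDstar (\<iota> 1)" using a by simp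
        then show ?thesis
        proof
          assume "\<psi> 1 = opMstar (\<iota> 1)" then show ?thesis using 1 False by (intro exI[of _ KMs]) auto
        next
          assume "\<psi> 1 = opDstar (\<iota> 1)" then show ?thesis using 1 False R by (intro exI[of _ KDs]) auto
        qed
      qed
    next
      case 2
      show ?thesis
      proof (cases "\<epsilon> R")
        case True
        then have "\<psi> R = opM (\<iota> R) \<or> \<psi> R = opD \<sigma> (\<iota> R)" using b by simp
        then show ?thesis
        proof
          assume "\<psi> R = opM (\<iota> R)" then show ?thesis using 2 True by (intro exI[of _ KM]) auto
        next
          assume "\<psi> R = opD \<sigma> (\<iota> R)" then show ?thesis using 2 True by (intro exI[of _ KD]) auto
        qed
      next
        case False
        then have "\<psi> R = opMstar (\<iota> R) \<or> \<psi> R = opA \<sigma> (\<iota> R)" using b by simp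
        then show ?thesis
        proof
          assume "\<psi> R = opMstar (\<iota> R)" then show ?thesis using 2 False by (intro exI[of _ KMs]) auto
        next
          assume "\<psi> R = opA \<sigma> (\<iota> R)" then show ?thesis using 2 False by (intro exI[of _ KA]) auto
        qed
      qed
    next
      case 3
      have nj: "j \<noteq> 1" "j \<noteq> R" using 3 R by auto
      have "\<psi> j = Mpow (\<iota> j) (\<epsilon> j) \<or> \<psi> j = Astarpow \<sigma> (\<iota> j) (\<epsilon> j) \<or> \<psi> j = Dpow \<sigma> (\<iota> j) (\<epsilon> j)"
        using c[OF 3] by simp
      then show ?thesis
      proof (elim disjE)
        assume "\<psi> j = Mpow (\<iota> j) (\<epsilon> j)"
        then show ?thesis using nj by (intro exI[of _ "if \<epsilon> j then KM else KMs"]) (auto simp: Mpow_def)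
      next
        assume "\<psi> j = Astarpow \<sigma> (\<iota> j) (\<epsilon> j)"
        then show ?thesis using nj by (intro exI[of _ "if \<epsilon> j then KAs else KA"]) (auto simp: Astarpow_def)
      next
        assume "\<psi> j = Dpow \<sigma> (\<iota> j) (\<epsilon> j)"
        then show ?thesis using nj by (intro exI[of _ "if \<epsilon> j then KD else KDs"]) (auto simp: Dpow_def)
      qed
    qed
  qed
  then obtain \<kappa> where K: "\<And>j. j \<in> {1..R} \<Longrightarrow> \<psi> j = sem \<sigma> (\<kappa> j) (\<iota> j) \<and> epsk (\<kappa> j) = \<epsilon> j \<and>
      (j = 1 \<longrightarrow> \<not> ispush (\<kappa> j)) \<and> (j = R \<longrightarrow> R = 1 \<or> \<not> ispop (\<kappa> j))"
    by metis
  have aw: "apply_word \<psi> R (eta k) = Gw \<psi> k 1 R" by (simp add: apply_word_def Gw_def)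
  have W: "apply_word \<psi> R (eta k) [(k',bb,x)] = val \<sigma> \<kappa> \<iota> k 1 R [(0,k',bb)] * (complex_of_real x) ^ (touches \<kappa> 1 R 0)"
    for bb x
  proof -
    have "Gw \<psi> k 1 R [(k',bb,x)] = val \<sigma> \<kappa> \<iota> k 1 R [(0,k',bb)] * tp \<kappa> 1 R [(k',bb,x)]"
      by (rule conc) (use K in \<open>auto simp: shp_def shx_def\<close>)
    then show ?thesis by (simp add: aw tp_def)
  qed
  have k'N: "k' \<in> {1..N}" using k' .
  obtain b0 where v: "val \<sigma> \<kappa> \<iota> k 1 R [(0,k',b0)] \<noteq> 0" and evb: "even (touches \<kappa> 1 R 0)"
    using final_analytic[OF meas[OF k'N] sym[OF k'N] fin[OF k'N] W nz] by blast
  note vn = val_nz[OF v]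
  obtain Sf where Sf: "run \<kappa> \<iota> 1 R [(0,k',b0)] = Some Sf" "length Sf = 1" "fst (snd (hd Sf)) = k"
    using vn by blast
  have evp: "odd (touches \<kappa> (Suc p) (R - p) 0)" if p: "1 \<le> p" "p \<le> R" "ispush (\<kappa> p)" for p
  proof -
    have A: "\<forall>m<R. ispush (\<kappa> (1+m)) \<longrightarrow> mom \<sigma> (\<iota> (1+m)) (Suc (touches \<kappa> (Suc (1+m)) (R - Suc m) 0)) \<noteq> 0"
      using vn by blast
    have pm: "p - 1 < R" "1 + (p - 1) = p" "Suc (p - 1) = p" using p by auto
    have "ispush (\<kappa> (1 + (p - 1))) \<longrightarrow> mom \<sigma> (\<iota> (1 + (p - 1))) (Suc (touches \<kappa> (Suc (1 + (p - 1))) (R - Suc (p - 1)) 0)) \<noteq> 0"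
      using A pm(1) by blast
    then have m: "mom \<sigma> (\<iota> p) (Suc (touches \<kappa> (Suc p) (R - p) 0)) \<noteq> 0" using p pm(2,3) by simp
    have ipN: "\<iota> p \<in> {1..N}" using iota p by simp
    show ?thesis
    proof (rule ccontr)
      assume "\<not> odd (touches \<kappa> (Suc p) (R - p) 0)"
      then have "odd (Suc (touches \<kappa> (Suc p) (R - p) 0))" by simp
      note mo = mom_odd[OF meas[OF ipN] sym[OF ipN] this]
      then have "mom \<sigma> (\<iota> p) (Suc (touches \<kappa> (Suc p) (R - p) 0)) = 0"
        unfolding mom_def by simp
      then show False using m by simp
    qed
  qed
  interpret C: crun \<kappa> \<iota> R k' b0 \<epsilon>
  proof
    show "1 \<le> R" by (rule R)
    show "run \<kappa> \<iota> 1 R [(0, k', b0)] \<noteq> None" using Sf by simp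
    show "length (the (run \<kappa> \<iota> 1 R [(0, k', b0)])) = 1" using Sf by simp
    show "\<not> ispush (\<kappa> 1)" using K[of 1] R by simp
    show "R = 1 \<or> \<not> ispop (\<kappa> R)" using K[of R] R by simp
    show "even (touches \<kappa> 1 R 0)" by (rule evb)
    show "\<And>p. 1 \<le> p \<Longrightarrow> p \<le> R \<Longrightarrow> ispush (\<kappa> p) \<Longrightarrow> odd (touches \<kappa> (Suc p) (R - p) 0)" by (rule evp)
    show "\<And>p. 1 \<le> p \<Longrightarrow> p \<le> R \<Longrightarrow> \<epsilon> p = epsk (\<kappa> p)" using K by simp
  qed
  have kk: "k = k'" using C.bottom(3) C.stR Sf by simp
  have i1: "k' = \<iota> 1" "\<iota> 1 = \<iota> R" using C.bottom(1,2) by simp_all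
  have ph: "\<psi> j = phi \<sigma> R \<iota> \<epsilon> C.\<pi> j" if j: "j \<in> {1..R}" for j
  proof -
    have Kj: "\<psi> j = sem \<sigma> (\<kappa> j) (\<iota> j)" "epsk (\<kappa> j) = \<epsilon> j" using K[OF j] by auto
    show ?thesis
    proof (cases "j = 1 \<or> j = R")
      case True
      then have "\<not> ispush (\<kappa> j) \<and> \<not> ispop (\<kappa> j)" using C.bottom(1,2) by auto
      then show ?thesis using True Kj by (cases "\<kappa> j") (auto simp: phi_def Mpow_def)
    next
      case False
      then have j2: "2 \<le> j" "j \<le> R - 1" "1 \<le> j" "j \<le> R" using j by auto
      show ?thesis
      proof (cases "ispush (\<kappa> j)")
        case True
        have "Min (block_of C.\<pi> j) = j" using C.Min_push[OF j2(3,4) True] .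
        then show ?thesis using False True Kj by (cases "\<kappa> j") (auto simp: phi_def)
      next
        case np: False
        have mn: "j \<noteq> Min (block_of C.\<pi> j)" using C.Min_nonpush[OF j2(1) j2(4) np] by simp
        show ?thesis
        proof (cases "ispop (\<kappa> j)")
          case True
          have "Max (block_of C.\<pi> j) = j" using C.Max_pop[OF j2(3,4) True] .
          then show ?thesis using False True np mn Kj by (cases "\<kappa> j") (auto simp: phi_def)
        next
          case npo: False
          have "j \<noteq> Max (block_of C.\<pi> j)" using C.Max_M[OF j2(3,2) np npo] by simp
          then show ?thesis using False npo np mn Kj by (cases "\<kappa> j") (auto simp: phi_def Mpow_def)
        qed
      qed
    qed
  qed
  show ?thesis
    using kk i1 C.NC_pi C.NC_irr_pi C.block_ok_pi ph by blast
qed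

end
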